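(* Let $A$ be a unital associative $\mathbb{K}$-algebra. Then $(T^+(A),\bar\bullet^\ell,P_A)$ is a $TD$-algebra with unit $1_A\otimes 1_{\mathbb{K}}$; that is, for all $x,y\in T^+(A)$, $$P_A(x)\,\bar\bullet^\ell\,P_A(y)=P_A\bigl(x\,\bar\bullet^\ell\,P_A(y)+P_A(x)\,\bar\bullet^\ell\,y-x\,\bar\bullet^\ell\,P_A(1_A)\,\bar\bullet^\ell\,y\bigr),$$ where $P_A(1_A)=1_A\otimes1_A$.
   Context: $\mathbb{K}$ is a field of characteristic $0$, $A$ has product $[a;b]$ and unit $1_A$. $T(A)=\bigoplus_{n\ge0}A^{\otimes n}$ with $A^{\otimes0}=\mathbb{K}1_{\mathbb{K}}$; $a\otimes1_{\mathbb{K}}$ is identified with $a$. The left-shift shuffle $\bullet^\ell$ is the bilinear product on $T(A)$ with $k1_{\mathbb{K}}\bullet^\ell U=kU=U\bullet^\ell k1_{\mathbb{K}}$ and, for $a,b\in A$, $U,V\in T(A)$, $(a\otimes U)\bullet^\ell(b\otimes V)=a\otimes\bigl(U\bullet^\ell(b\otimes V)\bigr)+b\otimes\bigl((a\otimes U)\bullet^\ell V\bigr)-[a;b]\otimes1_A\otimes(U\bullet^\ell V)$; it is associative with unit $1_{\mathbb{K}}$. $T^+(A):=A\otimes T(A)=\bigoplus_{n\ge1}A^{\otimes n}$ with product $(a\otimes U)\,\bar\bullet^\ell\,(b\otimes V):=[a;b]\otimes(U\bullet^\ell V)$ and unit $1_A\otimes1_{\mathbb{K}}$ (identified with $1_A$).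 $P_A:T^+(A)\to T^+(A)$ is the linear map $P_A(a_1\otimes\cdots\otimes a_n)=1_A\otimes a_1\otimes\cdots\otimes a_n$. A $TD$-algebra is a pair $(B,P)$, $B$ a unital associative algebra, $P:B\to B$ linear with $P(x)P(y)=P\bigl(P(x)y+xP(y)\bigr)-P\bigl(x\,P(1_B)\,y\bigr)$ for all $x,y$. *)

theory Defs
  imports Main HOL.Vector_Spaces "HOL-Library.Poly_Mapping"
begin

text \<open>
Model of the tensor algebra T(A) over a field K:
T(A) is the quotient of the free K-vector space on words (lists) of elements of A,
i.e. the type of finitely supported maps from words to K, by the subspace generated by the multilinearity
relations in every tensor slot (see tensor_rel).  A word [a1,...,an] stands for the pure
tensor a1 \<otimes> ... \<otimes> an, and [] stands for 1_K.  All operations are defined on words and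
extended linearly/bilinearly to the free space; equalities in T(A) are equalities modulo
tensor_rel.
\<close>

definition fscale :: "'k::comm_ring_1 \<Rightarrow> ('w \<Rightarrow>\<^sub>0 'k) \<Rightarrow> ('w \<Rightarrow>\<^sub>0 'k)" where
  "fscale c p = Poly_Mapping.map (\<lambda>x. c * x) p"

definition word :: "'w \<Rightarrow> ('w \<Rightarrow>\<^sub>0 'k::comm_ring_1)" where
  "word w = Poly_Mapping.single w 1"

definition linext :: "('w \<Rightarrow> ('v \<Rightarrow>\<^sub>0 'k::comm_ring_1)) \<Rightarrow> ('w \<Rightarrow>\<^sub>0 'k) \<Rightarrow> ('v \<Rightarrow>\<^sub>0 'k)" where
  "linext f p = (\<Sum>u\<in>Poly_Mapping.keys p. fscale (Poly_Mapping.lookup p u) (f u))"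

definition bilext :: "('w \<Rightarrow> 'w \<Rightarrow> ('v \<Rightarrow>\<^sub>0 'k::comm_ring_1)) \<Rightarrow> ('w \<Rightarrow>\<^sub>0 'k) \<Rightarrow> ('w \<Rightarrow>\<^sub>0 'k) \<Rightarrow> ('v \<Rightarrow>\<^sub>0 'k)" where
  "bilext f p q = (\<Sum>u\<in>Poly_Mapping.keys p. \<Sum>v\<in>Poly_Mapping.keys q. fscale (Poly_Mapping.lookup p u * Poly_Mapping.lookup q v) (f u v))"

definition tcons :: "'a \<Rightarrow> ('a list \<Rightarrow>\<^sub>0 'k::comm_ring_1) \<Rightarrow> ('a list \<Rightarrow>\<^sub>0 'k)" where
  "tcons a = linext (\<lambda>u. word (a # u))"

fun wsh :: "('a::ring_1) list \<Rightarrow> 'a list \<Rightarrow> ('a list \<Rightarrow>\<^sub>0 'k::comm_ring_1)" where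
  "wsh [] V = word V"
| "wsh U [] = word U"
| "wsh (a # U) (b # V) =
     tcons a (wsh U (b # V)) + tcons b (wsh (a # U) V) - tcons (a * b) (tcons 1 (wsh U V))"

definition lsh :: "('a::ring_1 list \<Rightarrow>\<^sub>0 'k::comm_ring_1) \<Rightarrow> ('a list \<Rightarrow>\<^sub>0 'k) \<Rightarrow> ('a list \<Rightarrow>\<^sub>0 'k)" where
  "lsh = bilext wsh"

text \<open>the product on T^+(A) on words: (a\<otimes>U) bar (b\<otimes>V) = [a;b] \<otimes> (U \<bullet> V)
  (the value on the empty word is irrelevant, T^+(A) has no length-0 component)\<close>
fun wbar :: "('a::ring_1) list \<Rightarrow> 'a list \<Rightarrow> ('a list \<Rightarrow>\<^sub>0 'k::comm_ring_1)" where
  "wbar (a # U) (b # V) = tcons (a * b) (wsh U V)"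
| "wbar _ _ = 0"

definition lbar :: "('a::ring_1 list \<Rightarrow>\<^sub>0 'k::comm_ring_1) \<Rightarrow> ('a list \<Rightarrow>\<^sub>0 'k) \<Rightarrow> ('a list \<Rightarrow>\<^sub>0 'k)" where
  "lbar = bilext wbar"

definition PA :: "('a::ring_1 list \<Rightarrow>\<^sub>0 'k::comm_ring_1) \<Rightarrow> ('a list \<Rightarrow>\<^sub>0 'k)" where
  "PA = tcons 1"

text \<open>the subspace of multilinearity relations; scale is the K-action on A\<close>
inductive_set tensor_rel :: "('k::comm_ring_1 \<Rightarrow> 'a::plus \<Rightarrow> 'a) \<Rightarrow> ('a list \<Rightarrow>\<^sub>0 'k) set"
  for scale where
  zero: "0 \<in> tensor_rel scale"
| add_gen: "word (u @ (a + b) # v) - word (u @ a # v) - word (u @ b # v) \<in> tensor_rel scale"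
| smul_gen: "word (u @ scale c a # v) - fscale c (word (u @ a # v)) \<in> tensor_rel scale"
| plus: "p \<in> tensor_rel scale \<Longrightarrow> q \<in> tensor_rel scale \<Longrightarrow> p + q \<in> tensor_rel scale"
| cmul: "p \<in> tensor_rel scale \<Longrightarrow> fscale c p \<in> tensor_rel scale"

definition teq :: "('k::comm_ring_1 \<Rightarrow> 'a::plus \<Rightarrow> 'a) \<Rightarrow> ('a list \<Rightarrow>\<^sub>0 'k) \<Rightarrow> ('a list \<Rightarrow>\<^sub>0 'k) \<Rightarrow> bool" where
  "teq scale p q \<longleftrightarrow> p - q \<in> tensor_rel scale"

definition in_Tplus :: "('a list \<Rightarrow>\<^sub>0 'k::zero) \<Rightarrow> bool" where
  "in_Tplus p \<longleftrightarrow> [] \<notin> Poly_Mapping.keys p"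

end

theory Submission
  imports Defs
begin

lemma lookup_fscale [simp]: "Poly_Mapping.lookup (fscale c p) k = c * Poly_Mapping.lookup p k"
  by (simp add: fscale_def Poly_Mapping.map.rep_eq when_def)

lemma fscale_add: "fscale c (p + q) = fscale c p + fscale c q"
  by (rule poly_mapping_eqI) (simp add: lookup_add distrib_left)

lemma fscale_diff: "fscale c (p - q) = fscale c p - fscale c q"
  by (rule poly_mapping_eqI) (simp add: lookup_minus right_diff_distrib)

lemma fscale_addc: "fscale (a + b) p = fscale a p + fscale b p"
  by (rule poly_mapping_eqI) (simp add: lookup_add distrib_right)

lemma fscale_mult: "fscale a (fscale b p) = fscale (a * b) p"
  by (rule poly_mapping_eqI) (simp add: mult.assoc)

lemma fscale_one [simp]: "fscale 1 p = p"
  by (rule poly_mapping_eqI) simp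

lemma fscale_zero [simp]: "fscale 0 p = 0" "fscale c 0 = 0"
  by (rule poly_mapping_eqI, simp)+

lemma fscale_sum: "fscale c (sum g S) = (\<Sum>x\<in>S. fscale c (g x))"
  by (rule poly_mapping_eqI) (simp add: lookup_sum sum_distrib_left)

lemma keys_word [simp]: "Poly_Mapping.keys (word u :: _ \<Rightarrow>\<^sub>0 'k::comm_ring_1) = {u}"
  by (simp add: word_def)

lemma lookup_word_self [simp]: "Poly_Mapping.lookup (word u :: _ \<Rightarrow>\<^sub>0 'k::comm_ring_1) u = 1"
  by (simp add: word_def)

lemma linext_superset:
  assumes "finite S" "Poly_Mapping.keys p \<subseteq> S"
  shows "linext f p = (\<Sum>u\<in>S. fscale (Poly_Mapping.lookup p u) (f u))"
  unfolding linext_def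
  by (rule sum.mono_neutral_left) (use assms in \<open>auto simp: in_keys_iff\<close>)

lemma linext_add: "linext f (p + q) = linext f p + linext f q"
proof -
  let ?S = "Poly_Mapping.keys p \<union> Poly_Mapping.keys q"
  have "linext f (p + q) = (\<Sum>u\<in>?S. fscale (Poly_Mapping.lookup (p + q) u) (f u))"
    by (rule linext_superset) (auto simp: keys_add)
  also have "\<dots> = (\<Sum>u\<in>?S. fscale (Poly_Mapping.lookup p u) (f u))
                 + (\<Sum>u\<in>?S. fscale (Poly_Mapping.lookup q u) (f u))"
    by (simp add: lookup_add fscale_addc sum.distrib)
  also have "\<dots> = linext f p + linext f q"
    by (simp add: linext_superset[symmetric])
  finally show ?thesis .
qed

lemma linext_fscale: "linext f (fscale c p) = fscale c (linext f p)"
proof -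
  have "linext f (fscale c p) = (\<Sum>u\<in>Poly_Mapping.keys p. fscale (Poly_Mapping.lookup (fscale c p) u) (f u))"
    by (rule linext_superset) (auto simp: in_keys_iff)
  also have "\<dots> = fscale c (linext f p)"
    by (simp add: linext_def fscale_sum fscale_mult)
  finally show ?thesis .
qed

lemma linext_word [simp]: "linext f (word u) = f u"
  by (simp add: linext_def)

lemma linext_cong: "(\<And>u. u \<in> Poly_Mapping.keys p \<Longrightarrow> f u = g u) \<Longrightarrow> linext f p = linext g p"
  by (simp add: linext_def)

definition lin :: "(('w \<Rightarrow>\<^sub>0 'k::comm_ring_1) \<Rightarrow> ('v \<Rightarrow>\<^sub>0 'k)) \<Rightarrow> bool" where
  "lin F \<longleftrightarrow> (\<forall>p q. F (p + q) = F p + F q) \<and> (\<forall>c p. F (fscale c p) = fscale c (F p))"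

lemma lin_linext: "lin (linext f)"
  by (simp add: lin_def linext_add linext_fscale)

lemma lin_addD: "lin F \<Longrightarrow> F (p + q) = F p + F q"
  by (simp add: lin_def)

lemma lin_fscaleD: "lin F \<Longrightarrow> F (fscale c p) = fscale c (F p)"
  by (simp add: lin_def)

lemma lin_zero: "lin F \<Longrightarrow> F 0 = 0"
  using lin_addD[of F 0 0] by simp

lemma lin_diffD: "lin F \<Longrightarrow> F (p - q) = F p - F q"
  using lin_addD[of F "p - q" q] by (simp add: eq_diff_eq)

lemma lin_comp: "lin F \<Longrightarrow> lin G \<Longrightarrow> lin (\<lambda>x. F (G x))"
  by (simp add: lin_def)

lemma lin_plus: "lin F \<Longrightarrow> lin G \<Longrightarrow> lin (\<lambda>x. F x + G x)"
  by (simp add: lin_def fscale_add)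

lemma lin_minus: "lin F \<Longrightarrow> lin G \<Longrightarrow> lin (\<lambda>x. F x - G x)"
  by (simp add: lin_def fscale_diff)

lemma lin_sum: assumes "lin F" "finite S" shows "F (sum g S) = (\<Sum>x\<in>S. F (g x))"
  using assms(2) by (induction S rule: finite_induct) (simp_all add: lin_zero[OF assms(1)] lin_addD[OF assms(1)])

lemma expansion: "p = (\<Sum>u\<in>Poly_Mapping.keys p. fscale (Poly_Mapping.lookup p u) (word u))"
proof -
  have *: "finite I \<Longrightarrow> Poly_Mapping.lookup (\<Sum>i\<in>I. fscale (Poly_Mapping.lookup p i) (word i)) j =
            (if j \<in> I then Poly_Mapping.lookup p j else 0)" for I j
    by (induction I rule: finite_induct) (auto simp: word_def lookup_single lookup_add when_def)
  show ?thesis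
    by (rule poly_mapping_eqI) (fastforce simp add: in_keys_iff *)
qed

lemma lin_expand: "lin F \<Longrightarrow> F p = linext (\<lambda>u. F (word u)) p"
proof -
  assume F: "lin F"
  have "F p = F (\<Sum>u\<in>Poly_Mapping.keys p. fscale (Poly_Mapping.lookup p u) (word u))"
    by (subst expansion) simp
  also have "\<dots> = linext (\<lambda>u. F (word u)) p"
    by (simp add: lin_sum[OF F] lin_fscaleD[OF F] linext_def)
  finally show ?thesis .
qed

lemma bilext_left: "bilext f p q = linext (\<lambda>u. linext (f u) q) p"
  by (simp add: bilext_def linext_def fscale_sum fscale_mult)

lemma bilext_right: "bilext f p q = linext (\<lambda>v. linext (\<lambda>u. f u v) p) q"
  unfolding bilext_def linext_def fscale_sum fscale_mult
  by (subst sum.swap) (simp add: mult.commute)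

lemma lin_lbar1: "lin (\<lambda>p. lbar p q)"
  unfolding lbar_def bilext_left by (rule lin_linext)

lemma lin_lbar2: "lin (\<lambda>q. lbar p q)"
  unfolding lbar_def bilext_right by (rule lin_linext)

lemma lin_PA: "lin PA"
  unfolding PA_def tcons_def by (rule lin_linext)

lemma lin_tcons: "lin (tcons a)"
  unfolding tcons_def by (rule lin_linext)

lemma tcons_add [simp]: "tcons a (p + q) = tcons a p + tcons a q"
  using lin_addD[OF lin_tcons] .

lemma tcons_diff [simp]: "tcons a (p - q) = tcons a p - tcons a q"
  using lin_diffD[OF lin_tcons] .

lemma tcons_word [simp]: "tcons a (word u) = word (a # u)"
  by (simp add: tcons_def)

lemma lbar_word [simp]: "lbar (word u) (word v) = wbar u v"
  by (simp add: lbar_def bilext_def)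

lemma wsh_Nil2 [simp]: "wsh U [] = word U"
  by (cases U) simp_all

lemma wsh_one: "wsh U [1] = word (1 # U)"
  by (induction U) simp_all

lemma wsh_one_left: "wsh (1 # U) V = tcons 1 (wsh U V)"
  by (induction V) simp_all

theorem proposition4p7:
  fixes scale :: "'k::field_char_0 \<Rightarrow> 'a::ring_1 \<Rightarrow> 'a"
    and x y :: "'a list \<Rightarrow>\<^sub>0 'k"
  assumes "vector_space scale"
    and "\<And>c a b. scale c (a * b) = scale c a * b"
    and "\<And>c a b. scale c (a * b) = a * scale c b"
    and "in_Tplus x" and "in_Tplus y"
  shows "teq scale (lbar (PA x) (PA y))
           (PA (lbar x (PA y) + lbar (PA x) y
                - lbar (lbar x (PA (word [1]))) y))"
proof -
  define L where "L = (\<lambda>x y. lbar (PA x) (PA y) :: 'a list \<Rightarrow>\<^sub>0 'k)"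
  define R where "R = (\<lambda>x y. PA (lbar x (PA y) + lbar (PA x) y
                - lbar (lbar x (PA (word [1]))) y) :: 'a list \<Rightarrow>\<^sub>0 'k)"
  have linL1: "lin (\<lambda>x. L x q)" for q
    unfolding L_def by (intro lin_comp[OF lin_lbar1] lin_PA)
  have linR1: "lin (\<lambda>x. R x q)" for q
    unfolding R_def
    by (intro lin_comp[OF lin_PA] lin_plus lin_minus lin_comp[OF lin_lbar1] lin_PA lin_lbar1)
  have linL2: "lin (\<lambda>q. L p q)" for p
    unfolding L_def by (intro lin_comp[OF lin_lbar2] lin_PA)
  have linR2: "lin (\<lambda>q. R p q)" for p
    unfolding R_def
    by (intro lin_comp[OF lin_PA] lin_plus lin_minus lin_comp[OF lin_lbar2] lin_PA lin_lbar2)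
  have words: "L (word u) (word v) = R (word u) (word v)" if nu: "u \<noteq> []" and nv: "v \<noteq> []" for u v
  proof -
    obtain a U where u: "u = a # U" using nu by (cases u) blast+
    obtain b V where v: "v = b # V" using nv by (cases v) blast+
    show ?thesis
      unfolding L_def R_def u v PA_def by (simp add: wsh_one wsh_one_left)
  qed
  have "L x y = R x y"
  proof -
    have "L x y = linext (\<lambda>u. L (word u) y) x" by (rule lin_expand[OF linL1])
    also have "\<dots> = linext (\<lambda>u. R (word u) y) x"
    proof (rule linext_cong)
      fix u assume u: "u \<in> Poly_Mapping.keys x"
      then have "u \<noteq> []" using assms(4) unfolding in_Tplus_def by auto
      have "L (word u) y = linext (\<lambda>v. L (word u) (word v)) y" by (rule lin_expand[OF linL2])
      also have "\<dots> = linext (\<lambda>v. R (word u) (word v)) y"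
        by (rule linext_cong) (use \<open>u \<noteq> []\<close> assms(5) words in \<open>metis in_Tplus_def\<close>)
      also have "\<dots> = R (word u) y" by (rule lin_expand[OF linR2, symmetric])
      finally show "L (word u) y = R (word u) y" .
    qed
    also have "\<dots> = R x y" by (rule lin_expand[OF linR1, symmetric])
    finally show ?thesis .
  qed
  then show ?thesis
    unfolding teq_def L_def R_def by (simp add: tensor_rel.zero)
qed

end
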